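(* Let $r\geq 0$ and $n\geq 1$ be integers. For every $l\geq 0$, the $l$-th prolongation $\mathcal{A}^{(l)}$ of $\mathcal{A}^{(0)}=\mathrm{Sym}^{2r-1}H\otimes E$ is isomorphic, as a representation of $\mathbf{Sp}(1)\times\mathbf{Sp}(n)$, to $$\mathcal{A}^{(l)}\;\cong\;\mathrm{Sym}^{2r-l-1}H\otimes\mathrm{Sym}^{l+1}E$$ (in particular $\mathcal{A}^{(l)}=0$ for $l\geq 2r$).
   Context: $H\cong\mathbb{C}^2$ and $E\cong\mathbb{C}^{2n}$ are the standard representations of $\mathbf{Sp}(1)$ and $\mathbf{Sp}(n)$ (with invariant symplectic forms); $\mathrm{Sym}^m=0$ for $m<0$. Let $\sigma:(H\otimes E)\otimes\mathrm{Sym}^{2r}H\to\mathrm{Sym}^{2r+1}H\otimes E$, $\sigma(h\otimes e\otimes\phi)=(h\cdot\phi)\otimes e$, and $\mathcal{A}^{(0)}=\ker\sigma\cong\mathrm{Sym}^{2r-1}H\otimes E$. With $V=H\otimes E$, let $\Delta:\mathrm{Sym}^{l+1}V\to\mathrm{Sym}^lV\otimes V$ be the diagonal map determined by $\frac1{(l+1)!}\xi^{l+1}\mapsto\frac1{l!}\xi^l\otimes\xi$. For $l\geq1$, $\mathcal{A}^{(l)}$ is the kernel of $(\mathrm{id}\otimes\sigma)\circ(\Delta\otimes\mathrm{id}):\mathrm{Sym}^{l+1}(H\otimes E)\otimes\mathrm{Sym}^{2r}H\to\mathrm{Sym}^l(H\otimes E)\otimes\mathrm{Sym}^{2r+1}H\otimes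 E$. *)

theory Defs
  imports "HOL-Analysis.Analysis"
begin

text \<open>Symmetric powers are modelled as homogeneous polynomial functions on the dual
space (written in dual coordinates); tensor products of symmetric powers of two spaces
as bihomogeneous polynomial functions of two vector arguments.\<close>

definition mexp :: "'x set \<Rightarrow> nat \<Rightarrow> ('x \<Rightarrow> nat) set" where
  "mexp X m = {\<alpha>. (\<forall>x. x \<notin> X \<longrightarrow> \<alpha> x = 0) \<and> (\<Sum>x\<in>X. \<alpha> x) = m}"

definition bihom :: "'x set \<Rightarrow> nat \<Rightarrow> 'y set \<Rightarrow> nat
    \<Rightarrow> (('x \<Rightarrow> complex) \<Rightarrow> ('y \<Rightarrow> complex) \<Rightarrow> complex) \<Rightarrow> bool" where
  "bihom X m Y k F \<longleftrightarrow> (\<exists>c. \<forall>v w. F v w =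
     (\<Sum>\<alpha>\<in>mexp X m. \<Sum>\<beta>\<in>mexp Y k.
        c \<alpha> \<beta> * (\<Prod>x\<in>X. v x ^ \<alpha> x) * (\<Prod>y\<in>Y. w y ^ \<beta> y)))"

text \<open>Coordinates: H has indices {0,1}, E has indices {0..<2n}, V = H \<otimes> E has pairs.\<close>
definition Hset :: "nat set" where "Hset = {..<2}"
definition Eset :: "nat \<Rightarrow> nat set" where "Eset n = {..<2*n}"
definition Vset :: "nat \<Rightarrow> (nat \<times> nat) set" where "Vset n = Hset \<times> Eset n"

definition dy :: "nat \<times> nat \<Rightarrow> ((nat \<times> nat \<Rightarrow> complex) \<Rightarrow> (nat \<Rightarrow> complex) \<Rightarrow> complex)
    \<Rightarrow> (nat \<times> nat \<Rightarrow> complex) \<Rightarrow> (nat \<Rightarrow> complex) \<Rightarrow> complex" where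
  "dy p F y u = deriv (\<lambda>t. F (y(p := t)) u) (y p)"

text \<open>The l-th prolongation: kernel of (id \<otimes> sigma) o (Delta \<otimes> id) on
  Sym^(l+1)(H \<otimes> E) \<otimes> Sym^(2r) H. Delta is the gradient in the V-variables,
  sigma multiplies the H-index by the H-variable u.\<close>
definition prolong :: "nat \<Rightarrow> nat \<Rightarrow> nat
    \<Rightarrow> ((nat \<times> nat \<Rightarrow> complex) \<Rightarrow> (nat \<Rightarrow> complex) \<Rightarrow> complex) set" where
  "prolong r n l = {F. bihom (Vset n) (l+1) Hset (2*r) F \<and>
      (\<forall>j<2*n. \<forall>y u. (\<Sum>i<2. u i * dy (i,j) F y u) = 0)}"

text \<open>Sym^(2r-l-1) H \<otimes> Sym^(l+1) E (zero if 2r-l-1 < 0).\<close>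
definition target :: "nat \<Rightarrow> nat \<Rightarrow> nat
    \<Rightarrow> ((nat \<Rightarrow> complex) \<Rightarrow> (nat \<Rightarrow> complex) \<Rightarrow> complex) set" where
  "target r n l = {G. if l + 1 \<le> 2*r then bihom Hset (2*r - l - 1) (Eset n) (l+1) G
                      else G = (\<lambda>_ _. 0)}"

definition omega :: "nat \<Rightarrow> nat \<Rightarrow> nat \<Rightarrow> complex" where
  "omega k a b = (if a < k \<and> b = a + k then 1 else if b < k \<and> a = b + k then -1 else 0)"

text \<open>A (2k x 2k matrix) lies in the compact group Sp(k) = Sp(2k,C) \<inter> U(2k).\<close>
definition Sp :: "nat \<Rightarrow> (nat \<Rightarrow> nat \<Rightarrow> complex) \<Rightarrow> bool" where
  "Sp k A \<longleftrightarrow>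
     (\<forall>i<2*k. \<forall>j<2*k. (\<Sum>a<2*k. \<Sum>b<2*k. A a i * omega k a b * A b j) = omega k i j) \<and>
     (\<forall>i<2*k. \<forall>j<2*k. (\<Sum>a<2*k. cnj (A a i) * A a j) = (if i = j then 1 else 0))"

definition actV :: "nat \<Rightarrow> (nat \<Rightarrow> nat \<Rightarrow> complex) \<Rightarrow> (nat \<Rightarrow> nat \<Rightarrow> complex)
    \<Rightarrow> ((nat \<times> nat \<Rightarrow> complex) \<Rightarrow> (nat \<Rightarrow> complex) \<Rightarrow> complex)
    \<Rightarrow> ((nat \<times> nat \<Rightarrow> complex) \<Rightarrow> (nat \<Rightarrow> complex) \<Rightarrow> complex)" where
  "actV n A B F = (\<lambda>y u. F (\<lambda>(k,l). \<Sum>i<2. \<Sum>j<2*n. A i k * y (i,j) * B j l)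
                          (\<lambda>k. \<Sum>i<2. A i k * u i))"

definition actT :: "nat \<Rightarrow> (nat \<Rightarrow> nat \<Rightarrow> complex) \<Rightarrow> (nat \<Rightarrow> nat \<Rightarrow> complex)
    \<Rightarrow> ((nat \<Rightarrow> complex) \<Rightarrow> (nat \<Rightarrow> complex) \<Rightarrow> complex)
    \<Rightarrow> ((nat \<Rightarrow> complex) \<Rightarrow> (nat \<Rightarrow> complex) \<Rightarrow> complex)" where
  "actT n A B G = (\<lambda>u e. G (\<lambda>k. \<Sum>i<2. A i k * u i) (\<lambda>l. \<Sum>j<2*n. B j l * e j))"

end

theory Submission
  imports Defs
begin


definition mon :: "'x set \<Rightarrow> ('x \<Rightarrow> nat) \<Rightarrow> ('x \<Rightarrow> complex) \<Rightarrow> complex" where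
  "mon X \<alpha> v = (\<Prod>x\<in>X. v x ^ \<alpha> x)"

lemma bihom_alt: "bihom X m Y k F \<longleftrightarrow> (\<exists>c. \<forall>v w. F v w =
   (\<Sum>\<alpha>\<in>mexp X m. \<Sum>\<beta>\<in>mexp Y k. c \<alpha> \<beta> * mon X \<alpha> v * mon Y \<beta> w))"
  by (simp add: bihom_def mon_def)

lemma finite_mexp: assumes "finite X" shows "finite (mexp X m)"
proof -
  have "mexp X m \<subseteq> {f. \<forall>x. (x \<in> X \<longrightarrow> f x \<in> {..m}) \<and> (x \<notin> X \<longrightarrow> f x = 0)}"
  proof
    fix f assume f: "f \<in> mexp X m"
    { fix x assume "x \<in> X"
      hence "f x \<le> (\<Sum>x\<in>X. f x)" using assms by (intro member_le_sum) auto
      hence "f x \<le> m" using f by (simp add: mexp_def) }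
    thus "f \<in> {f. \<forall>x. (x \<in> X \<longrightarrow> f x \<in> {..m}) \<and> (x \<notin> X \<longrightarrow> f x = 0)}"
      using f by (auto simp: mexp_def)
  qed
  thus ?thesis by (rule finite_subset) (intro finite_set_of_finite_funs assms, simp)
qed

lemma mexp_0: assumes "finite X" shows "mexp X 0 = {\<lambda>_. 0}"
  using assms by (auto simp: mexp_def fun_eq_iff)

lemma mon_0[simp]: "mon X (\<lambda>_. 0) v = 1" by (simp add: mon_def)

lemma mon_add: "mon X (\<lambda>x. a x + b x) v = mon X a v * mon X b v"
  by (simp add: mon_def power_add prod.distrib)

lemma mon_scale: "mon X \<alpha> (\<lambda>x. s * v x) = s ^ (\<Sum>x\<in>X. \<alpha> x) * mon X \<alpha> v"
  by (simp add: mon_def power_mult_distrib prod.distrib power_sum)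

lemma mexp_add: "a \<in> mexp X m \<Longrightarrow> b \<in> mexp X k \<Longrightarrow> (\<lambda>x. a x + b x) \<in> mexp X (m+k)"
  by (simp add: mexp_def sum.distrib)

lemma bihom_zero: "bihom X m Y k (\<lambda>_ _. 0)"
  unfolding bihom_alt by (rule exI[of _ "\<lambda>_ _. 0"]) simp

lemma bihom_one: "finite X \<Longrightarrow> finite Y \<Longrightarrow> bihom X 0 Y 0 (\<lambda>_ _. 1)"
  unfolding bihom_alt by (rule exI[of _ "\<lambda>_ _. 1"]) (simp add: mexp_0)

lemma bihom_scale: assumes "bihom X m Y k F" shows "bihom X m Y k (\<lambda>v w. a * F v w)"
proof -
  obtain c where c: "\<And>v w. F v w = (\<Sum>\<alpha>\<in>mexp X m. \<Sum>\<beta>\<in>mexp Y k. c \<alpha> \<beta> * mon X \<alpha> v * mon Y \<beta> w)"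
    using assms unfolding bihom_alt by blast
  show ?thesis unfolding bihom_alt
    by (rule exI[of _ "\<lambda>\<alpha> \<beta>. a * c \<alpha> \<beta>"]) (simp add: c sum_distrib_left mult.assoc)
qed

lemma bihom_sum: assumes "finite I" "\<And>i. i \<in> I \<Longrightarrow> bihom X m Y k (F i)"
  shows "bihom X m Y k (\<lambda>v w. \<Sum>i\<in>I. F i v w)"
proof -
  have "\<forall>i\<in>I. \<exists>c. \<forall>v w. F i v w = (\<Sum>\<alpha>\<in>mexp X m. \<Sum>\<beta>\<in>mexp Y k. c \<alpha> \<beta> * mon X \<alpha> v * mon Y \<beta> w)"
    using assms(2) unfolding bihom_alt by blast
  from bchoice[OF this] obtain c where c: "\<forall>i\<in>I. \<forall>v w. F i v w = (\<Sum>\<alpha>\<in>mexp X m. \<Sum>\<beta>\<in>mexp Y k. c i \<alpha> \<beta> * mon X \<alpha> v * mon Y \<beta> w)"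
    ..
  show ?thesis unfolding bihom_alt
  proof (rule exI[of _ "\<lambda>\<alpha> \<beta>. \<Sum>i\<in>I. c i \<alpha> \<beta>"], intro allI)
    fix v w
    have "(\<Sum>i\<in>I. F i v w) = (\<Sum>i\<in>I. \<Sum>\<alpha>\<in>mexp X m. \<Sum>\<beta>\<in>mexp Y k. c i \<alpha> \<beta> * mon X \<alpha> v * mon Y \<beta> w)"
      using c by (intro sum.cong refl) blast
    also have "\<dots> = (\<Sum>\<alpha>\<in>mexp X m. \<Sum>\<beta>\<in>mexp Y k. \<Sum>i\<in>I. c i \<alpha> \<beta> * mon X \<alpha> v * mon Y \<beta> w)"
      by (subst sum.swap, rule sum.cong[OF refl], rule sum.swap)
    also have "\<dots> = (\<Sum>\<alpha>\<in>mexp X m. \<Sum>\<beta>\<in>mexp Y k. (\<Sum>i\<in>I. c i \<alpha> \<beta>) * mon X \<alpha> v * mon Y \<beta> w)"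
      by (simp add: sum_distrib_right)
    finally show "(\<Sum>i\<in>I. F i v w) = \<dots>" .
  qed
qed

lemma bihom_add: assumes "bihom X m Y k F" "bihom X m Y k G" shows "bihom X m Y k (\<lambda>v w. F v w + G v w)"
  using bihom_sum[of "{True,False}" X m Y k "\<lambda>b. if b then F else G"] assms by simp

lemma bihom_swap: assumes "bihom X m Y k F" shows "bihom Y k X m (\<lambda>a b. F b a)"
proof -
  obtain c where c: "\<And>v w. F v w = (\<Sum>\<alpha>\<in>mexp X m. \<Sum>\<beta>\<in>mexp Y k. c \<alpha> \<beta> * mon X \<alpha> v * mon Y \<beta> w)"
    using assms unfolding bihom_alt by blast
  show ?thesis unfolding bihom_alt
    apply (rule exI[of _ "\<lambda>\<beta> \<alpha>. c \<alpha> \<beta>"], intro allI)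
    apply (subst c, subst sum.swap)
    apply (intro sum.cong refl)
    by (simp add: mult_ac)
qed

lemma bihom_mon: assumes "finite X" "finite Y" "a \<in> mexp X m" "b \<in> mexp Y k"
  shows "bihom X m Y k (\<lambda>v w. mon X a v * mon Y b w)"
  unfolding bihom_alt
proof (rule exI[of _ "\<lambda>\<alpha> \<beta>. if \<alpha> = a \<and> \<beta> = b then 1 else 0"], intro allI)
  fix v w
  have "(\<Sum>\<alpha>\<in>mexp X m. \<Sum>\<beta>\<in>mexp Y k. (if \<alpha> = a \<and> \<beta> = b then 1 else 0) * mon X \<alpha> v * mon Y \<beta> w)
     = (\<Sum>p\<in>mexp X m \<times> mexp Y k. if p = (a,b) then mon X a v * mon Y b w else 0)"
    unfolding sum.cartesian_product by (rule sum.cong) (auto split: if_splits)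
  also have "\<dots> = mon X a v * mon Y b w" using assms by (simp add: finite_mexp)
  finally show "mon X a v * mon Y b w = (\<Sum>\<alpha>\<in>mexp X m. \<Sum>\<beta>\<in>mexp Y k. (if \<alpha> = a \<and> \<beta> = b then 1 else 0) * mon X \<alpha> v * mon Y \<beta> w)" ..
qed

lemma mon_delta: "finite X \<Longrightarrow> x \<in> X \<Longrightarrow> mon X (\<lambda>x'. if x' = x then 1 else 0) v = v x"
proof -
  assume a: "finite X" "x \<in> X"
  have "mon X (\<lambda>x'. if x' = x then 1 else 0) v = (\<Prod>x'\<in>X. if x' = x then v x' else 1)"
    unfolding mon_def by (intro prod.cong) auto
  thus ?thesis using a by simp
qed

lemma delta_mexp: "x \<in> X \<Longrightarrow> finite X \<Longrightarrow> (\<lambda>x'. if x' = x then 1 else 0) \<in> mexp X 1"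
  by (simp add: mexp_def)

lemma bihom_varL: assumes "finite X" "finite Y" "x \<in> X" shows "bihom X 1 Y 0 (\<lambda>v w. v x)"
  using bihom_mon[OF assms(1,2) delta_mexp[OF assms(3,1)], of "\<lambda>_. 0" 0] assms
  by (simp add: mexp_0 mon_delta)

lemma bihom_varR: assumes "finite X" "finite Y" "y \<in> Y" shows "bihom X 0 Y 1 (\<lambda>v w. w y)"
  using bihom_swap[OF bihom_varL[OF assms(2,1,3)]] .



lemma bihom_deg: "bihom X m Y k F \<Longrightarrow> m = m' \<Longrightarrow> k = k' \<Longrightarrow> bihom X m' Y k' F" by simp

lemma bihom_mult: assumes fin: "finite X" "finite Y" and F: "bihom X m1 Y k1 F" and G: "bihom X m2 Y k2 G"
  shows "bihom X (m1+m2) Y (k1+k2) (\<lambda>v w. F v w * G v w)"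
proof -
  obtain c1 where c1: "\<And>v w. F v w = (\<Sum>\<alpha>\<in>mexp X m1. \<Sum>\<beta>\<in>mexp Y k1. c1 \<alpha> \<beta> * mon X \<alpha> v * mon Y \<beta> w)"
    using F unfolding bihom_alt by blast
  obtain c2 where c2: "\<And>v w. G v w = (\<Sum>\<alpha>\<in>mexp X m2. \<Sum>\<beta>\<in>mexp Y k2. c2 \<alpha> \<beta> * mon X \<alpha> v * mon Y \<beta> w)"
    using G unfolding bihom_alt by blast
  have eq: "(\<lambda>v w. F v w * G v w) = (\<lambda>v w. \<Sum>a1\<in>mexp X m1. \<Sum>b1\<in>mexp Y k1. \<Sum>a2\<in>mexp X m2. \<Sum>b2\<in>mexp Y k2.
      (c1 a1 b1 * c2 a2 b2) * (mon X (\<lambda>x. a1 x + a2 x) v * mon Y (\<lambda>y. b1 y + b2 y) w))"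
  proof (intro ext)
    fix v w
    have "F v w * G v w = (\<Sum>a1\<in>mexp X m1. \<Sum>b1\<in>mexp Y k1. (c1 a1 b1 * mon X a1 v * mon Y b1 w) * G v w)"
      unfolding c1[of v w] by (simp only: sum_distrib_right)
    also have "\<dots> = (\<Sum>a1\<in>mexp X m1. \<Sum>b1\<in>mexp Y k1. \<Sum>a2\<in>mexp X m2. \<Sum>b2\<in>mexp Y k2.
       (c1 a1 b1 * mon X a1 v * mon Y b1 w) * (c2 a2 b2 * mon X a2 v * mon Y b2 w))"
      unfolding c2[of v w] by (simp only: sum_distrib_left)
    also have "\<dots> = (\<Sum>a1\<in>mexp X m1. \<Sum>b1\<in>mexp Y k1. \<Sum>a2\<in>mexp X m2. \<Sum>b2\<in>mexp Y k2.
      (c1 a1 b1 * c2 a2 b2) * (mon X (\<lambda>x. a1 x + a2 x) v * mon Y (\<lambda>y. b1 y + b2 y) w))"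
      by (intro sum.cong refl) (simp add: mon_add mult_ac)
    finally show "F v w * G v w = \<dots>" .
  qed
  show ?thesis unfolding eq
    by (intro bihom_sum bihom_scale bihom_mon mexp_add finite_mexp fin) auto
qed

lemma bihom_pow: assumes fin: "finite X" "finite Y" and F: "bihom X m Y k F"
  shows "bihom X (m*p) Y (k*p) (\<lambda>v w. F v w ^ p)"
proof (induction p)
  case 0 thus ?case using bihom_one[OF fin] by simp
next
  case (Suc p)
  from bihom_mult[OF fin F Suc] show ?case by simp
qed

lemma bihom_prod: assumes fin: "finite X" "finite Y" and I: "finite I"
  and F: "\<And>i. i \<in> I \<Longrightarrow> bihom X (m i) Y (k i) (F i)"
  shows "bihom X (\<Sum>i\<in>I. m i) Y (\<Sum>i\<in>I. k i) (\<lambda>v w. \<Prod>i\<in>I. F i v w)"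
  using I F
proof (induction I rule: finite_induct)
  case empty thus ?case using bihom_one[OF fin] by simp
next
  case (insert i I)
  from bihom_mult[OF fin insert.prems[of i] insert.IH] insert show ?case by simp
qed

lemma bihom_homL: assumes "bihom X m Y k F" shows "F (\<lambda>x. s * v x) w = s ^ m * F v w"
proof -
  obtain c where c: "\<And>v w. F v w = (\<Sum>\<alpha>\<in>mexp X m. \<Sum>\<beta>\<in>mexp Y k. c \<alpha> \<beta> * mon X \<alpha> v * mon Y \<beta> w)"
    using assms unfolding bihom_alt by blast
  have "F (\<lambda>x. s * v x) w = (\<Sum>\<alpha>\<in>mexp X m. \<Sum>\<beta>\<in>mexp Y k. s ^ m * (c \<alpha> \<beta> * mon X \<alpha> v * mon Y \<beta> w))"
    unfolding c by (intro sum.cong refl) (simp add: mon_scale mexp_def mult_ac)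
  thus ?thesis by (simp add: c sum_distrib_left)
qed

lemma bihom_homR: assumes "bihom X m Y k F" shows "F v (\<lambda>x. s * w x) = s ^ k * F v w"
  using bihom_homL[OF bihom_swap[OF assms]] by simp

lemma bihom_local: assumes "bihom X m Y k F" "\<And>x. x \<in> X \<Longrightarrow> v x = v' x" "\<And>y. y \<in> Y \<Longrightarrow> w y = w' y"
  shows "F v w = F v' w'"
proof -
  obtain c where c: "\<And>v w. F v w = (\<Sum>\<alpha>\<in>mexp X m. \<Sum>\<beta>\<in>mexp Y k. c \<alpha> \<beta> * mon X \<alpha> v * mon Y \<beta> w)"
    using assms unfolding bihom_alt by blast
  have "mon X a v = mon X a v'" for a unfolding mon_def using assms(2) by (intro prod.cong) auto
  moreover have "mon Y b w = mon Y b w'" for b unfolding mon_def using assms(3) by (intro prod.cong) auto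
  ultimately show ?thesis by (simp add: c)
qed

lemma bihom_subst:
  assumes fin: "finite X" "finite Y" "finite A" "finite B" and F: "bihom X m Y k F"
    and S: "\<And>x. x \<in> X \<Longrightarrow> bihom A p B q (\<sigma> x)"
    and T: "\<And>y. y \<in> Y \<Longrightarrow> bihom A p' B q' (\<tau> y)"
  shows "bihom A (m*p + k*p') B (m*q + k*q') (\<lambda>a b. F (\<lambda>x. \<sigma> x a b) (\<lambda>y. \<tau> y a b))"
proof -
  obtain c where c: "\<And>v w. F v w = (\<Sum>\<alpha>\<in>mexp X m. \<Sum>\<beta>\<in>mexp Y k. c \<alpha> \<beta> * mon X \<alpha> v * mon Y \<beta> w)"
    using F unfolding bihom_alt by blast
  have eq: "(\<lambda>a b. F (\<lambda>x. \<sigma> x a b) (\<lambda>y. \<tau> y a b)) = (\<lambda>a b. \<Sum>\<alpha>\<in>mexp X m. \<Sum>\<beta>\<in>mexp Y k.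
      c \<alpha> \<beta> * ((\<Prod>x\<in>X. \<sigma> x a b ^ \<alpha> x) * (\<Prod>y\<in>Y. \<tau> y a b ^ \<beta> y)))"
    by (intro ext) (simp add: c mon_def mult.assoc)
  have P1: "bihom A (m*p) B (m*q) (\<lambda>a b. \<Prod>x\<in>X. \<sigma> x a b ^ \<alpha> x)" if "\<alpha> \<in> mexp X m" for \<alpha>
  proof -
    have "bihom A (\<Sum>x\<in>X. p * \<alpha> x) B (\<Sum>x\<in>X. q * \<alpha> x) (\<lambda>a b. \<Prod>x\<in>X. \<sigma> x a b ^ \<alpha> x)"
      by (intro bihom_prod fin bihom_pow S)
    moreover have "(\<Sum>x\<in>X. \<alpha> x) = m" using that by (simp add: mexp_def)
    ultimately show ?thesis by (simp add: sum_distrib_left[symmetric] mult.commute)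
  qed
  have P2: "bihom A (k*p') B (k*q') (\<lambda>a b. \<Prod>y\<in>Y. \<tau> y a b ^ \<beta> y)" if "\<beta> \<in> mexp Y k" for \<beta>
  proof -
    have "bihom A (\<Sum>x\<in>Y. p' * \<beta> x) B (\<Sum>x\<in>Y. q' * \<beta> x) (\<lambda>a b. \<Prod>y\<in>Y. \<tau> y a b ^ \<beta> y)"
      by (intro bihom_prod fin bihom_pow T)
    moreover have "(\<Sum>x\<in>Y. \<beta> x) = k" using that by (simp add: mexp_def)
    ultimately show ?thesis by (simp add: sum_distrib_left[symmetric] mult.commute)
  qed
  show ?thesis unfolding eq
    by (intro bihom_sum bihom_scale finite_mexp fin bihom_mult[OF fin(3,4)] P1 P2)
qed



definition dmon :: "'x set \<Rightarrow> ('x \<Rightarrow> nat) \<Rightarrow> 'x \<Rightarrow> ('x \<Rightarrow> complex) \<Rightarrow> complex" where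
  "dmon X \<alpha> x v = of_nat (\<alpha> x) * v x ^ (\<alpha> x - 1) * (\<Prod>x'\<in>X - {x}. v x' ^ \<alpha> x')"

lemma mon_deriv:
  assumes "finite X"
  shows "((\<lambda>t. mon X \<alpha> (\<lambda>x. y x + t * d x)) has_field_derivative
           (\<Sum>x\<in>X. d x * dmon X \<alpha> x (\<lambda>x. y x + t * d x))) (at t)"
proof -
  let ?f = "\<lambda>i t. (y i + t * d i) ^ \<alpha> i"
  let ?D = "\<lambda>i. of_nat (\<alpha> i) * (y i + t * d i) ^ (\<alpha> i - 1) * d i"
  have "(?f i has_derivative (*) (?D i)) (at t)" for i
    unfolding has_field_derivative_def[symmetric]
    by (auto intro!: derivative_eq_intros)
  from has_derivative_prod[of X ?f "\<lambda>i. (*) (?D i)" t UNIV, OF this]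
  have "((\<lambda>t. \<Prod>i\<in>X. ?f i t) has_derivative (\<lambda>h. \<Sum>i\<in>X. ?D i * h * (\<Prod>j\<in>X-{i}. ?f j t))) (at t)"
    by simp
  moreover have "(\<lambda>h. \<Sum>i\<in>X. ?D i * h * (\<Prod>j\<in>X-{i}. ?f j t)) = (*) (\<Sum>x\<in>X. d x * dmon X \<alpha> x (\<lambda>x. y x + t * d x))"
    by (auto simp: fun_eq_iff dmon_def sum_distrib_left sum_distrib_right mult_ac intro!: sum.cong)
  ultimately show ?thesis unfolding has_field_derivative_def mon_def by simp
qed

lemma bihom_dderiv:
  assumes fin: "finite X" and F: "bihom X m Y k F"
  shows "\<exists>DF. \<forall>y d w t. ((\<lambda>t. F (\<lambda>x. y x + t * d x) w) has_field_derivative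
            (\<Sum>x\<in>X. d x * DF x (\<lambda>x. y x + t * d x) w)) (at t)"
proof -
  obtain c where c: "\<And>v w. F v w = (\<Sum>\<alpha>\<in>mexp X m. \<Sum>\<beta>\<in>mexp Y k. c \<alpha> \<beta> * mon X \<alpha> v * mon Y \<beta> w)"
    using F unfolding bihom_alt by blast
  let ?DF = "\<lambda>x v w. \<Sum>\<alpha>\<in>mexp X m. \<Sum>\<beta>\<in>mexp Y k. c \<alpha> \<beta> * dmon X \<alpha> x v * mon Y \<beta> w"
  show ?thesis
  proof (rule exI[of _ ?DF], intro allI)
    fix y d w t
    have "((\<lambda>t. \<Sum>\<alpha>\<in>mexp X m. \<Sum>\<beta>\<in>mexp Y k. c \<alpha> \<beta> * mon X \<alpha> (\<lambda>x. y x + t * d x) * mon Y \<beta> w)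
       has_field_derivative (\<Sum>\<alpha>\<in>mexp X m. \<Sum>\<beta>\<in>mexp Y k. c \<alpha> \<beta> * (\<Sum>x\<in>X. d x * dmon X \<alpha> x (\<lambda>x. y x + t * d x)) * mon Y \<beta> w)) (at t)"
      by (intro DERIV_sum DERIV_cmult DERIV_cmult_right mon_deriv fin)
    moreover have "(\<Sum>\<alpha>\<in>mexp X m. \<Sum>\<beta>\<in>mexp Y k. c \<alpha> \<beta> * (\<Sum>x\<in>X. d x * dmon X \<alpha> x (\<lambda>x. y x + t * d x)) * mon Y \<beta> w)
       = (\<Sum>x\<in>X. d x * ?DF x (\<lambda>x. y x + t * d x) w)"
    proof -
      have "(\<Sum>\<alpha>\<in>mexp X m. \<Sum>\<beta>\<in>mexp Y k. c \<alpha> \<beta> * (\<Sum>x\<in>X. d x * dmon X \<alpha> x (\<lambda>x. y x + t * d x)) * mon Y \<beta> w)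
         = (\<Sum>\<alpha>\<in>mexp X m. \<Sum>\<beta>\<in>mexp Y k. \<Sum>x\<in>X. d x * (c \<alpha> \<beta> * dmon X \<alpha> x (\<lambda>x. y x + t * d x) * mon Y \<beta> w))"
        by (simp add: sum_distrib_left sum_distrib_right mult_ac)
      also have "\<dots> = (\<Sum>\<alpha>\<in>mexp X m. \<Sum>x\<in>X. \<Sum>\<beta>\<in>mexp Y k. d x * (c \<alpha> \<beta> * dmon X \<alpha> x (\<lambda>x. y x + t * d x) * mon Y \<beta> w))"
        by (rule sum.cong[OF refl], rule sum.swap)
      also have "\<dots> = (\<Sum>x\<in>X. \<Sum>\<alpha>\<in>mexp X m. \<Sum>\<beta>\<in>mexp Y k. d x * (c \<alpha> \<beta> * dmon X \<alpha> x (\<lambda>x. y x + t * d x) * mon Y \<beta> w))"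
        by (rule sum.swap)
      also have "\<dots> = (\<Sum>x\<in>X. d x * ?DF x (\<lambda>x. y x + t * d x) w)"
        by (simp add: sum_distrib_left)
      finally show ?thesis .
    qed
    ultimately show "((\<lambda>t. F (\<lambda>x. y x + t * d x) w) has_field_derivative
            (\<Sum>x\<in>X. d x * ?DF x (\<lambda>x. y x + t * d x) w)) (at t)"
      by (simp add: c)
  qed
qed

lemma dy_DF:
  assumes fin: "finite X" and p: "p \<in> X"
    and DF: "\<forall>y d w t. ((\<lambda>t. F (\<lambda>x. y x + t * d x) w) has_field_derivative
            (\<Sum>x\<in>X. d x * DF x (\<lambda>x. y x + t * d x) w)) (at t)"
  shows "dy p F y u = DF p y u"
proof -
  define y0 where "y0 = y(p := 0)"
  let ?y0 = "y0" and ?d = "\<lambda>x. if x = p then 1 else 0 :: complex"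
  have e: "\<And>t. y(p := t) = (\<lambda>x. ?y0 x + t * ?d x)" by (auto simp: fun_eq_iff y0_def)
  have e2: "(\<lambda>x. ?y0 x + y p * ?d x) = y" by (auto simp: fun_eq_iff y0_def)
  have "((\<lambda>t. F (\<lambda>x. ?y0 x + t * ?d x) u) has_field_derivative
            (\<Sum>x\<in>X. ?d x * DF x (\<lambda>x. ?y0 x + y p * ?d x) u)) (at (y p))"
    by (rule DF[rule_format])
  also have "(\<Sum>x\<in>X. ?d x * DF x (\<lambda>x. ?y0 x + y p * ?d x) u) = DF p y u"
  proof -
    have "(\<Sum>x\<in>X. ?d x * DF x (\<lambda>x. ?y0 x + y p * ?d x) u) = (\<Sum>x\<in>X. if x = p then DF x y u else 0)"
      unfolding e2 by (intro sum.cong) auto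
    also have "\<dots> = DF p y u" using fin p by simp
    finally show ?thesis .
  qed
  finally have "((\<lambda>t. F (y(p := t)) u) has_field_derivative DF p y u) (at (y p))"
    unfolding e .
  thus ?thesis unfolding dy_def by (rule DERIV_imp_deriv)
qed

lemma finite_Vset: "finite (Vset n)" by (simp add: Vset_def Hset_def Eset_def)
lemma finite_Hset: "finite Hset" by (simp add: Hset_def)
lemma finite_Eset: "finite (Eset n)" by (simp add: Eset_def)

lemma prolong_inv:
  assumes F: "F \<in> prolong r n l"
  shows "F (\<lambda>p. y p + u (fst p) * w (snd p)) u = F y u"
proof -
  have B: "bihom (Vset n) (l+1) Hset (2*r) F" and K: "\<And>j y u. j < 2*n \<Longrightarrow> (\<Sum>i<2. u i * dy (i,j) F y u) = 0"
    using F by (auto simp: prolong_def)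
  obtain DF where DF: "\<forall>y d w t. ((\<lambda>t. F (\<lambda>x. y x + t * d x) w) has_field_derivative
            (\<Sum>x\<in>Vset n. d x * DF x (\<lambda>x. y x + t * d x) w)) (at t)"
    using bihom_dderiv[OF finite_Vset B] by blast
  let ?d = "\<lambda>p. u (fst p) * w (snd p)"
  let ?g = "\<lambda>t. F (\<lambda>x. y x + t * ?d x) u"
  have "(?g has_field_derivative 0) (at t within UNIV)" for t
  proof -
    let ?yt = "\<lambda>x. y x + t * ?d x"
    have "(\<Sum>x\<in>Vset n. ?d x * DF x ?yt u) = (\<Sum>x\<in>Vset n. ?d x * dy x F ?yt u)"
      by (intro sum.cong refl) (simp add: dy_DF[OF finite_Vset _ DF])
    also have "\<dots> = (\<Sum>i<2. \<Sum>j<2*n. u i * w j * dy (i,j) F ?yt u)"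
      by (simp add: Vset_def Hset_def Eset_def sum.cartesian_product split_def)
    also have "\<dots> = (\<Sum>j<2*n. w j * (\<Sum>i<2. u i * dy (i,j) F ?yt u))"
      by (subst sum.swap) (simp add: sum_distrib_left mult_ac)
    also have "\<dots> = 0" by (simp add: K)
    finally have S0: "(\<Sum>x\<in>Vset n. ?d x * DF x ?yt u) = 0" .
    have "(?g has_field_derivative (\<Sum>x\<in>Vset n. ?d x * DF x ?yt u)) (at t)"
      by (rule DF[rule_format])
    thus ?thesis unfolding S0 by simp
  qed
  note Dz = this
  have "\<exists>c. \<forall>x\<in>UNIV. ?g x = c"
    by (rule has_field_derivative_zero_constant[OF convex_UNIV]) (rule Dz)
  then obtain c where c: "\<forall>x\<in>UNIV. ?g x = c" ..
  note g = c[rule_format, OF UNIV_I]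
  have "F (\<lambda>p. y p + u (fst p) * w (snd p)) u = c" using g[of 1] by simp
  moreover have "F y u = c" using g[of 0] by simp
  ultimately show ?thesis by simp
qed



definition Y0 :: "(nat \<Rightarrow> complex) \<Rightarrow> nat \<times> nat \<Rightarrow> complex" where
  "Y0 e = (\<lambda>p. if fst p = 1 then e (snd p) else 0)"
definition Y1 :: "(nat \<Rightarrow> complex) \<Rightarrow> nat \<times> nat \<Rightarrow> complex" where
  "Y1 e = (\<lambda>p. if fst p = 0 then e (snd p) else 0)"
definition uv :: "complex \<Rightarrow> complex \<Rightarrow> nat \<Rightarrow> complex" where
  "uv a b = (\<lambda>i. if i = 0 then a else b)"
definition zz :: "(nat \<times> nat \<Rightarrow> complex) \<Rightarrow> (nat \<Rightarrow> complex) \<Rightarrow> nat \<Rightarrow> complex" where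
  "zz y u = (\<lambda>j. u 0 * y (1,j) - u 1 * y (0,j))"
definition Psi :: "((nat \<Rightarrow> complex) \<Rightarrow> (nat \<Rightarrow> complex) \<Rightarrow> complex)
   \<Rightarrow> (nat \<times> nat \<Rightarrow> complex) \<Rightarrow> (nat \<Rightarrow> complex) \<Rightarrow> complex" where
  "Psi G = (\<lambda>y u. G u (zz y u))"
definition Phi :: "nat \<Rightarrow> nat \<Rightarrow> ((nat \<times> nat \<Rightarrow> complex) \<Rightarrow> (nat \<Rightarrow> complex) \<Rightarrow> complex)
   \<Rightarrow> (nat \<Rightarrow> complex) \<Rightarrow> (nat \<Rightarrow> complex) \<Rightarrow> complex" where
  "Phi r l F = (\<lambda>u e. if u 0 \<noteq> 0 then F (Y0 (\<lambda>j. e j / u 0)) u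
      else if u 1 \<noteq> 0 then F (Y1 (\<lambda>j. - e j / u 1)) u
      else if 2*r = l+1 then F (Y0 e) (uv 1 0) else 0)"

lemma zz_Y0: "zz (Y0 f) u = (\<lambda>j. u 0 * f j)" by (simp add: zz_def Y0_def)
lemma zz_Y1: "zz (Y1 f) u = (\<lambda>j. - u 1 * f j)" by (simp add: zz_def Y1_def)

lemma sum2: "(\<Sum>i<2. f i) = f 0 + f (1::nat)" by (simp add: numeral_2_eq_2)

lemma target_bihom: "G \<in> target r n l \<Longrightarrow> bihom Hset (2*r-l-1) (Eset n) (l+1) G"
  by (auto simp: target_def bihom_zero split: if_splits)

lemma target_zero: "G \<in> target r n l \<Longrightarrow> \<not> l + 1 \<le> 2*r \<Longrightarrow> G = (\<lambda>_ _. 0)"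
  by (auto simp: target_def split: if_splits)

lemma dy_Psi:
  assumes DG: "\<forall>y d w t. ((\<lambda>t. G w (\<lambda>x. y x + t * d x)) has_field_derivative
            (\<Sum>x\<in>Eset n. d x * DG x (\<lambda>x. y x + t * d x) w)) (at t)"
    and j: "j \<in> Eset n"
  shows "dy (i,j) (Psi G) y u = (if i = 0 then - u 1 else if i = 1 then u 0 else 0) * DG j (zz y u) u"
proof -
  define k where "k = (if i = 0 then - u 1 else if i = 1 then u 0 else 0)"
  define b where "b = zz (y((i,j) := 0)) u"
  let ?d = "\<lambda>j'. if j' = j then k else 0"
  have e: "\<And>t. zz (y((i,j) := t)) u = (\<lambda>j'. b j' + t * ?d j')"
    by (auto simp: fun_eq_iff zz_def b_def k_def algebra_simps)
  have e2: "(\<lambda>j'. b j' + y (i,j) * ?d j') = zz y u"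
    by (auto simp: fun_eq_iff zz_def b_def k_def algebra_simps)
  have "((\<lambda>t. G u (\<lambda>j'. b j' + t * ?d j')) has_field_derivative
            (\<Sum>x\<in>Eset n. ?d x * DG x (\<lambda>j'. b j' + y (i,j) * ?d j') u)) (at (y (i,j)))"
    by (rule DG[rule_format])
  also have "(\<Sum>x\<in>Eset n. ?d x * DG x (\<lambda>j'. b j' + y (i,j) * ?d j') u) = k * DG j (zz y u) u"
  proof -
    have "(\<Sum>x\<in>Eset n. ?d x * DG x (\<lambda>j'. b j' + y (i,j) * ?d j') u) = (\<Sum>x\<in>Eset n. if x = j then k * DG x (zz y u) u else 0)"
      unfolding e2 by (intro sum.cong) auto
    also have "\<dots> = k * DG j (zz y u) u" using j finite_Eset by simp
    finally show ?thesis .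
  qed
  finally have "((\<lambda>t. Psi G (y((i,j) := t)) u) has_field_derivative k * DG j (zz y u) u) (at (y (i,j)))"
    unfolding Psi_def e .
  thus ?thesis unfolding dy_def k_def by (rule DERIV_imp_deriv)
qed

lemma Psi_target: assumes G: "G \<in> target r n l" shows "Psi G \<in> prolong r n l"
proof -
  have GB: "bihom Hset (2*r-l-1) (Eset n) (l+1) G" by (rule target_bihom[OF G])
  have B: "bihom (Vset n) (l+1) Hset (2*r) (Psi G)"
  proof (cases "l + 1 \<le> 2*r")
    case True
    have S: "bihom (Vset n) 0 Hset 1 (\<lambda>y u. u i)" if "i \<in> Hset" for i
      by (rule bihom_varR[OF finite_Vset finite_Hset that])
    have T: "bihom (Vset n) 1 Hset 1 (\<lambda>y u. u 0 * y (1,j) - u 1 * y (0,j))" if "j \<in> Eset n" for j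
    proof -
      have v: "(1,j) \<in> Vset n" "(0,j) \<in> Vset n" using that by (auto simp: Vset_def Hset_def)
      have h: "(0::nat) \<in> Hset" "(1::nat) \<in> Hset" by (auto simp: Hset_def)
      have "bihom (Vset n) (0+1) Hset (1+0) (\<lambda>y u. u 0 * y (1,j))"
        by (intro bihom_mult finite_Vset finite_Hset bihom_varR bihom_varL h v)
      moreover have "bihom (Vset n) (0+1) Hset (1+0) (\<lambda>y u. (-1) * (u 1 * y (0,j)))"
        by (intro bihom_scale bihom_mult finite_Vset finite_Hset bihom_varR bihom_varL h v)
      ultimately have "bihom (Vset n) 1 Hset 1 (\<lambda>y u. u 0 * y (1,j) + (-1) * (u 1 * y (0,j)))"
        using bihom_add by fastforce
      thus ?thesis by simp
    qed
    have "bihom (Vset n) ((2*r-l-1)*0 + (l+1)*1) Hset ((2*r-l-1)*1 + (l+1)*1)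
       (\<lambda>a b. G (\<lambda>x. b x) (\<lambda>j. b 0 * a (1,j) - b 1 * a (0,j)))"
      by (rule bihom_subst[OF finite_Hset finite_Eset finite_Vset finite_Hset GB S T])
    moreover have "(2*r-l-1)*1 + (l+1)*1 = 2*r" using True by simp
    ultimately show ?thesis by (simp add: Psi_def zz_def)
  next
    case False
    hence "Psi G = (\<lambda>_ _. 0)" using target_zero[OF G] by (simp add: Psi_def)
    thus ?thesis by (simp add: bihom_zero)
  qed
  obtain DG where DG: "\<forall>y d w t. ((\<lambda>t. G w (\<lambda>x. y x + t * d x)) has_field_derivative
            (\<Sum>x\<in>Eset n. d x * DG x (\<lambda>x. y x + t * d x) w)) (at t)"
    using bihom_dderiv[OF finite_Eset bihom_swap[OF GB]] by blast
  have "(\<Sum>i<2. u i * dy (i,j) (Psi G) y u) = 0" if "j < 2*n" for j y u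
  proof -
    have j: "j \<in> Eset n" using that by (simp add: Eset_def)
    show ?thesis unfolding sum2 dy_Psi[OF DG j] by (simp add: algebra_simps)
  qed
  with B show ?thesis by (simp add: prolong_def)
qed

lemma Phi_Psi: assumes G: "G \<in> target r n l" shows "Phi r l (Psi G) = G"
proof (intro ext)
  fix u e
  have GB: "bihom Hset (2*r-l-1) (Eset n) (l+1) G" by (rule target_bihom[OF G])
  show "Phi r l (Psi G) u e = G u e"
  proof (cases "u 0 \<noteq> 0")
    case True thus ?thesis by (simp add: Phi_def Psi_def zz_Y0)
  next
    case F0: False
    show ?thesis
    proof (cases "u 1 \<noteq> 0")
      case True thus ?thesis using F0 by (simp add: Phi_def Psi_def zz_Y1)
    next
      case False
      have "G u e = G (\<lambda>i. 0 * uv 1 0 i) e"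
        using F0 False by (intro bihom_local[OF GB]) (auto simp: Hset_def less_2_cases_iff)
      also have "\<dots> = 0 ^ (2*r-l-1) * G (uv 1 0) e" by (rule bihom_homL[OF GB])
      finally have Gu: "G u e = 0 ^ (2*r-l-1) * G (uv 1 0) e" .
      show ?thesis
      proof (cases "2*r = l+1")
        case True
        have "Phi r l (Psi G) u e = G (uv 1 0) e"
          using F0 False True by (simp add: Phi_def Psi_def zz_Y0 uv_def)
        thus ?thesis using Gu True by simp
      next
        case ne: False
        have "G u e = 0"
        proof (cases "l + 1 \<le> 2*r")
          case True thus ?thesis using Gu ne by simp
        next
          case False thus ?thesis using target_zero[OF G False] by simp
        qed
        thus ?thesis using F0 False ne by (simp add: Phi_def)
      qed
    qed
  qed
qed

lemma actT_target: assumes G: "G \<in> target r n l" shows "actT n A B G \<in> target r n l"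
proof (cases "l + 1 \<le> 2*r")
  case True
  have GB: "bihom Hset (2*r-l-1) (Eset n) (l+1) G" by (rule target_bihom[OF G])
  have S: "bihom Hset 1 (Eset n) 0 (\<lambda>u e. \<Sum>i<2. A i k * u i)" for k
    by (intro bihom_sum bihom_scale bihom_varL finite_Hset finite_Eset) (auto simp: Hset_def)
  have T: "bihom Hset 0 (Eset n) 1 (\<lambda>u e. \<Sum>j<2*n. B j k * e j)" for k
    by (intro bihom_sum bihom_scale bihom_varR finite_Hset finite_Eset) (auto simp: Eset_def)
  have "bihom Hset ((2*r-l-1)*1 + (l+1)*0) (Eset n) ((2*r-l-1)*0 + (l+1)*1)
      (\<lambda>a b. G (\<lambda>k. \<Sum>i<2. A i k * a i) (\<lambda>k. \<Sum>j<2*n. B j k * b j))"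
    by (rule bihom_subst[OF finite_Hset finite_Eset finite_Hset finite_Eset GB S T])
  thus ?thesis using True by (simp add: target_def actT_def)
next
  case False
  thus ?thesis using target_zero[OF G False] by (simp add: target_def actT_def)
qed

lemma Sp1_det: "Sp 1 A \<Longrightarrow> A 0 0 * A 1 1 - A 1 0 * A 0 1 = 1"
  unfolding Sp_def by (drule conjunct1, drule spec[of _ 0], simp, drule spec[of _ 1])
    (simp add: sum2 omega_def)

lemma actV_Psi: assumes A: "Sp 1 A" shows "actV n A B (Psi G) = Psi (actT n A B G)"
proof (intro ext)
  fix y u
  have det: "A 0 0 * A 1 1 - A 1 0 * A 0 1 = 1" by (rule Sp1_det[OF A])
  let ?y' = "\<lambda>(k,l). \<Sum>i<2. \<Sum>j<2*n. A i k * y (i,j) * B j l"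
  let ?u' = "\<lambda>k. \<Sum>i<2. A i k * u i"
  have "zz ?y' ?u' = (\<lambda>l. \<Sum>j<2*n. B j l * zz y u j)"
  proof
    fix l
    have "zz ?y' ?u' l = (\<Sum>j<2*n. (A 0 0 * u 0 + A 1 0 * u 1) * (A 0 1 * y (0,j) * B j l + A 1 1 * y (1,j) * B j l)
         - (A 0 1 * u 0 + A 1 1 * u 1) * (A 0 0 * y (0,j) * B j l + A 1 0 * y (1,j) * B j l))"
      by (simp add: zz_def sum2 sum.distrib sum_distrib_left sum_subtractf distrib_left)
    also have "\<dots> = (\<Sum>j<2*n. (A 0 0 * A 1 1 - A 1 0 * A 0 1) * (B j l * zz y u j))"
      by (intro sum.cong refl) (simp add: zz_def algebra_simps)
    also have "\<dots> = (\<Sum>j<2*n. B j l * zz y u j)" by (simp only: det mult_1)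
    finally show "zz ?y' ?u' l = (\<Sum>j<2*n. B j l * zz y u j)" .
  qed
  thus "actV n A B (Psi G) y u = Psi (actT n A B G) y u"
    by (simp add: actV_def actT_def Psi_def)
qed



definition hb :: "nat \<Rightarrow> nat \<Rightarrow> nat \<Rightarrow> nat" where
  "hb N k = (\<lambda>i. if i = 0 then k else if i = 1 then N - k else 0)"

lemma prod2: "(\<Prod>i<2. f i) = f 0 * f (1::nat)" by (simp add: numeral_2_eq_2)

lemma mexp_H: "mexp Hset N = hb N ` {..N}"
proof
  show "mexp Hset N \<subseteq> hb N ` {..N}"
  proof
    fix \<alpha> assume a: "\<alpha> \<in> mexp Hset N"
    hence z: "\<And>i. i \<noteq> 0 \<Longrightarrow> i \<noteq> 1 \<Longrightarrow> \<alpha> i = 0" and s: "\<alpha> 0 + \<alpha> 1 = N"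
      by (auto simp: mexp_def Hset_def sum2)
    have "\<alpha> = hb N (\<alpha> 0)" using z s by (auto simp: hb_def fun_eq_iff)
    moreover have "\<alpha> 0 \<in> {..N}" using s by simp
    ultimately show "\<alpha> \<in> hb N ` {..N}" by blast
  qed
next
  show "hb N ` {..N} \<subseteq> mexp Hset N"
    by (auto simp: mexp_def Hset_def hb_def sum2)
qed

lemma inj_hb: "inj_on (hb N) {..N}"
  by (rule inj_onI) (metis hb_def)

lemma mon_hb: "mon Hset (hb N k) u = u 0 ^ k * u 1 ^ (N - k)"
  by (simp add: mon_def Hset_def prod2 hb_def)

lemma sum_mexp_H: "(\<Sum>\<beta>\<in>mexp Hset N. f \<beta>) = (\<Sum>k\<le>N. f (hb N k))"
  unfolding mexp_H by (rule sum.reindex[OF inj_hb, unfolded comp_def])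

lemma hexpand:
  assumes fY: "finite Y" and G: "bihom Hset N Y M G"
  shows "\<exists>q. (\<forall>u e. G u e = (\<Sum>k\<le>N. q k e * u 0 ^ k * u 1 ^ (N - k))) \<and> (\<forall>k. bihom Hset 0 Y M (\<lambda>u e. q k e))"
proof -
  obtain d where d: "\<And>v w. G v w = (\<Sum>\<alpha>\<in>mexp Hset N. \<Sum>\<beta>\<in>mexp Y M. d \<alpha> \<beta> * mon Hset \<alpha> v * mon Y \<beta> w)"
    using G unfolding bihom_alt by blast
  let ?q = "\<lambda>k e. \<Sum>\<gamma>\<in>mexp Y M. d (hb N k) \<gamma> * mon Y \<gamma> e"
  have 1: "G u e = (\<Sum>k\<le>N. ?q k e * u 0 ^ k * u 1 ^ (N - k))" for u e
    unfolding d sum_mexp_H mon_hb by (simp add: sum_distrib_right sum_distrib_left mult_ac)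
  have m: "bihom Hset 0 Y M (\<lambda>u e. mon Y \<gamma> e)" if "\<gamma> \<in> mexp Y M" for \<gamma>
    using bihom_mon[OF finite_Hset fY _ that, of "\<lambda>_. 0" 0] by (simp add: mexp_0 finite_Hset)
  have 2: "bihom Hset 0 Y M (\<lambda>u e. ?q k e)" for k
    by (intro bihom_sum bihom_scale finite_mexp fY m)
  show ?thesis
    by (rule exI[of _ ?q]) (use 1 2 in auto)
qed

lemma sum_single: "finite S \<Longrightarrow> a \<in> S \<Longrightarrow> (\<And>k. k \<in> S \<Longrightarrow> k \<noteq> a \<Longrightarrow> f k = 0) \<Longrightarrow> sum f S = f a"
  by (subst sum.remove[of S a]) (auto intro: sum.neutral)

lemma coeff_shift:
  fixes a b :: "nat \<Rightarrow> complex"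
  assumes H: "\<And>s::complex. (\<Sum>k\<le>N. a k * s ^ k) = (-s) ^ (L+1) * (\<Sum>k\<le>N. b k * s ^ k)"
  shows "\<And>k. k \<le> N \<Longrightarrow> k \<le> L \<Longrightarrow> a k = 0"
    and "(if L+1 \<le> N then a (L+1) else 0) = (-1) ^ (L+1) * b 0"
proof -
  define M where "M = N + L + 1"
  define ca where "ca i = (if i \<le> N then a i else 0)" for i
  define cb where "cb i = (if L+1 \<le> i \<and> i - (L+1) \<le> N then (-1)^(L+1) * b (i - (L+1)) else 0)" for i
  have A: "(\<Sum>i\<le>M. ca i * s ^ i) = (\<Sum>k\<le>N. a k * s ^ k)" for s :: complex
  proof -
    have "(\<Sum>i\<le>M. ca i * s ^ i) = (\<Sum>i\<le>N. ca i * s ^ i)"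
      by (rule sum.mono_neutral_right) (auto simp: M_def ca_def)
    thus ?thesis by (simp add: ca_def)
  qed
  have Bq: "(\<Sum>i\<le>M. cb i * s ^ i) = (-s) ^ (L+1) * (\<Sum>k\<le>N. b k * s ^ k)" for s :: complex
  proof -
    have "(\<Sum>i\<le>M. cb i * s ^ i) = (\<Sum>i\<in>(\<lambda>k. k + (L+1)) ` {..N}. cb i * s ^ i)"
      apply (rule sum.mono_neutral_right)
        apply (auto simp: M_def cb_def image_iff)
      subgoal for i by (drule bspec[of _ _ "i - Suc L"]) auto
      done
    also have "\<dots> = (\<Sum>k\<le>N. cb (k + (L+1)) * s ^ (k + (L+1)))"
      by (subst sum.reindex) (auto simp: inj_on_def)
    also have "\<dots> = (\<Sum>k\<le>N. (-s) ^ (L+1) * (b k * s ^ k))"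
    proof (intro sum.cong refl)
      fix k assume "k \<in> {..N}"
      hence c: "cb (k + (L+1)) = (-1)^(L+1) * b k" by (simp add: cb_def)
      show "cb (k + (L+1)) * s ^ (k + (L+1)) = (-s)^(L+1) * (b k * s^k)"
        unfolding c power_add power_minus[of s] by (simp only: mult_ac)
    qed
    finally show ?thesis by (simp add: sum_distrib_left)
  qed
  have "\<forall>x. (\<Sum>i\<le>M. ca i * x ^ i) = (\<Sum>i\<le>M. cb i * x ^ i)"
  proof
    fix x :: complex
    have "(\<Sum>i\<le>M. ca i * x ^ i) = (\<Sum>k\<le>N. a k * x ^ k)" by (rule A)
    also have "\<dots> = (-x) ^ (L+1) * (\<Sum>k\<le>N. b k * x ^ k)" by (rule H)
    also have "\<dots> = (\<Sum>i\<le>M. cb i * x ^ i)" by (rule Bq[symmetric])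
    finally show "(\<Sum>i\<le>M. ca i * x ^ i) = (\<Sum>i\<le>M. cb i * x ^ i)" .
  qed
  hence "\<forall>i\<le>M. ca i = cb i" by (rule polyfun_eq_coeffs[THEN iffD1])
  hence C: "\<And>i. i \<le> M \<Longrightarrow> ca i = cb i" by blast
  show "a k = 0" if "k \<le> N" "k \<le> L" for k
    using C[of k] that by (simp add: M_def ca_def cb_def)
  show "(if L+1 \<le> N then a (L+1) else 0) = (-1) ^ (L+1) * b 0"
    using C[of "L+1"] by (auto simp: M_def ca_def cb_def split: if_splits)
qed



lemma Vset_fst: "p \<in> Vset n \<Longrightarrow> fst p = 0 \<or> fst p = 1"
  by (auto simp: Vset_def Hset_def)

lemma Vset_snd: "p \<in> Vset n \<Longrightarrow> snd p \<in> Eset n"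
  by (auto simp: Vset_def)

lemma bihom_Y0: assumes p: "p \<in> Vset n" shows "bihom Hset 0 (Eset n) 1 (\<lambda>u e. Y0 e p)"
proof (cases "fst p = 1")
  case True
  hence eq: "(\<lambda>u e. Y0 e p) = (\<lambda>u e. e (snd p))" by (simp add: Y0_def)
  show ?thesis unfolding eq by (rule bihom_varR[OF finite_Hset finite_Eset Vset_snd[OF p]])
next
  case False
  hence eq: "(\<lambda>u e. Y0 e p) = (\<lambda>u e. 0)" by (simp add: Y0_def)
  show ?thesis unfolding eq by (rule bihom_zero)
qed

lemma bihom_Y1: assumes p: "p \<in> Vset n" shows "bihom Hset 0 (Eset n) 1 (\<lambda>u e. Y1 e p)"
proof (cases "fst p = 0")
  case True
  hence eq: "(\<lambda>u e. Y1 e p) = (\<lambda>u e. e (snd p))" by (simp add: Y1_def)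
  show ?thesis unfolding eq by (rule bihom_varR[OF finite_Hset finite_Eset Vset_snd[OF p]])
next
  case False
  hence eq: "(\<lambda>u e. Y1 e p) = (\<lambda>u e. 0)" by (simp add: Y1_def)
  show ?thesis unfolding eq by (rule bihom_zero)
qed

lemma bihom_uH: "i \<in> Hset \<Longrightarrow> bihom Hset 1 (Eset n) 0 (\<lambda>u e. u i)"
  by (intro bihom_varL finite_Hset finite_Eset)

lemma QR_bihom:
  assumes B: "bihom (Vset n) (l+1) Hset (2*r) F"
  shows "bihom Hset (2*r) (Eset n) (l+1) (\<lambda>u e. F (Y0 e) u)"
    and "bihom Hset (2*r) (Eset n) (l+1) (\<lambda>u e. F (Y1 e) u)"
proof -
  have "bihom Hset ((l+1)*0 + 2*r*1) (Eset n) ((l+1)*1 + 2*r*0) (\<lambda>a b. F (\<lambda>x. Y0 b x) (\<lambda>y. a y))"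
    by (rule bihom_subst[OF finite_Vset finite_Hset finite_Hset finite_Eset B bihom_Y0 bihom_uH])
  thus "bihom Hset (2*r) (Eset n) (l+1) (\<lambda>u e. F (Y0 e) u)" by simp
  have "bihom Hset ((l+1)*0 + 2*r*1) (Eset n) ((l+1)*1 + 2*r*0) (\<lambda>a b. F (\<lambda>x. Y1 b x) (\<lambda>y. a y))"
    by (rule bihom_subst[OF finite_Vset finite_Hset finite_Hset finite_Eset B bihom_Y1 bihom_uH])
  thus "bihom Hset (2*r) (Eset n) (l+1) (\<lambda>u e. F (Y1 e) u)" by simp
qed

lemma Phi_Psi_first:
  assumes F: "F \<in> prolong r n l" and u0: "u 0 \<noteq> 0"
  shows "Phi r l F u (zz y u) = F y u"
proof -
  have B: "bihom (Vset n) (l+1) Hset (2*r) F" using F by (simp add: prolong_def)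
  have "Phi r l F u (zz y u) = F (Y0 (\<lambda>j. zz y u j / u 0)) u" using u0 by (simp add: Phi_def)
  also have "\<dots> = F (\<lambda>p. y p + u (fst p) * (- y (0, snd p) / u 0)) u"
  proof (rule bihom_local[OF B])
    fix p assume p: "p \<in> Vset n"
    obtain i j where pij: "p = (i,j)" by (cases p)
    show "Y0 (\<lambda>j. zz y u j / u 0) p = y p + u (fst p) * (- y (0, snd p) / u 0)"
      using Vset_fst[OF p] u0 unfolding pij by (auto simp: Y0_def zz_def field_simps)
  qed simp
  also have "\<dots> = F y u" by (rule prolong_inv[OF F])
  finally show ?thesis .
qed

lemma Phi_Psi_second:
  assumes F: "F \<in> prolong r n l" and u0: "u 0 = 0" and u1: "u 1 \<noteq> 0"
  shows "Phi r l F u (zz y u) = F y u"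
proof -
  have B: "bihom (Vset n) (l+1) Hset (2*r) F" using F by (simp add: prolong_def)
  have "Phi r l F u (zz y u) = F (Y1 (\<lambda>j. - zz y u j / u 1)) u" using u0 u1 by (simp add: Phi_def)
  also have "\<dots> = F (\<lambda>p. y p + u (fst p) * (- y (1, snd p) / u 1)) u"
  proof (rule bihom_local[OF B])
    fix p assume p: "p \<in> Vset n"
    obtain i j where pij: "p = (i,j)" by (cases p)
    show "Y1 (\<lambda>j. - zz y u j / u 1) p = y p + u (fst p) * (- y (1, snd p) / u 1)"
      using Vset_fst[OF p] u0 u1 unfolding pij by (auto simp: Y1_def zz_def field_simps)
  qed simp
  also have "\<dots> = F y u" by (rule prolong_inv[OF F])
  finally show ?thesis .
qed

lemma aux_cancel: assumes "a * b = (1::complex)" shows "a * (q * (c * b) * d) = q * c * d"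
proof -
  have "a * (q * (c * b) * d) = (a * b) * (q * c * d)" by (simp only: mult_ac)
  thus ?thesis using assms by simp
qed

lemma aux_cancel2: assumes "a * b = (m::complex)" shows "a * (x * (c * b)) = m * x * c"
proof -
  have "a * (x * (c * b)) = (a * b) * (x * c)" by (simp only: mult_ac)
  thus ?thesis using assms by (simp only: mult_ac)
qed

lemma prolong_main:
  assumes F: "F \<in> prolong r n l"
  shows "Phi r l F \<in> target r n l \<and> Psi (Phi r l F) = F"
proof -
  have B: "bihom (Vset n) (l+1) Hset (2*r) F" using F by (simp add: prolong_def)
  obtain q where q1: "\<And>u e. F (Y0 e) u = (\<Sum>k\<le>2*r. q k e * u 0 ^ k * u 1 ^ (2*r - k))"
      and q2: "\<And>k. bihom Hset 0 (Eset n) (l+1) (\<lambda>u e. q k e)"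
    using hexpand[OF finite_Eset QR_bihom(1)[OF B]] by blast
  obtain rr where r1: "\<And>u e. F (Y1 e) u = (\<Sum>k\<le>2*r. rr k e * u 0 ^ k * u 1 ^ (2*r - k))"
    using hexpand[OF finite_Eset QR_bihom(2)[OF B]] by blast
  have I: "(\<Sum>k\<le>2*r. q k e * s ^ k) = (-s) ^ (l+1) * (\<Sum>k\<le>2*r. rr k e * s ^ k)" for s e
  proof -
    have "F (Y0 e) (uv s 1) = F (\<lambda>p. Y0 e p + uv s 1 (fst p) * (- e (snd p))) (uv s 1)"
      by (rule prolong_inv[OF F, symmetric])
    also have "\<dots> = F (\<lambda>p. (-s) * Y1 e p) (uv s 1)"
    proof (rule bihom_local[OF B])
      fix p assume p: "p \<in> Vset n"
      show "Y0 e p + uv s 1 (fst p) * - e (snd p) = - s * Y1 e p"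
        using Vset_fst[OF p] by (auto simp: Y0_def Y1_def uv_def)
    qed simp
    also have "\<dots> = (-s)^(l+1) * F (Y1 e) (uv s 1)" by (rule bihom_homL[OF B])
    finally show ?thesis unfolding q1 r1 by (simp add: uv_def)
  qed
  have Z: "\<And>k e. k \<le> 2*r \<Longrightarrow> k \<le> l \<Longrightarrow> q k e = 0"
    using coeff_shift(1)[OF I] by blast
  have T: "\<And>e. (if l+1 \<le> 2*r then q (l+1) e else 0) = (-1)^(l+1) * rr 0 e"
    using coeff_shift(2)[OF I] by blast
  define P where "P = (\<lambda>(u::nat \<Rightarrow> complex) (e::nat \<Rightarrow> complex). \<Sum>k\<in>{l+1..2*r}. q k e * u 0 ^ (k - (l+1)) * u 1 ^ (2*r - k))"
  have PhiP: "Phi r l F u e = P u e" for u e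
  proof (cases "u 0 \<noteq> 0")
    case u0: True
    have "Phi r l F u e = F (Y0 (\<lambda>j. e j / u 0)) u" using u0 by (simp add: Phi_def)
    also have "Y0 (\<lambda>j. e j / u 0) = (\<lambda>p. (1 / u 0) * Y0 e p)" by (auto simp: Y0_def fun_eq_iff)
    also have "F (\<lambda>p. (1 / u 0) * Y0 e p) u = (1 / u 0) ^ (l+1) * F (Y0 e) u" by (rule bihom_homL[OF B])
    also have "F (Y0 e) u = (\<Sum>k\<in>{l+1..2*r}. q k e * u 0 ^ k * u 1 ^ (2*r - k))"
      unfolding q1 by (rule sum.mono_neutral_right) (auto simp: Z)
    also have "(1 / u 0) ^ (l+1) * (\<Sum>k\<in>{l+1..2*r}. q k e * u 0 ^ k * u 1 ^ (2*r - k)) = P u e"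
      unfolding P_def sum_distrib_left
    proof (intro sum.cong refl)
      fix k assume kr: "k \<in> {l+1..2*r}"
      have kk: "k - (l+1) + (l+1) = k" using kr by simp
      have k: "u 0 ^ k = u 0 ^ (k - (l+1)) * u 0 ^ (l+1)"
        by (simp only: power_add[symmetric] kk)
      have h: "(1 / u 0) ^ (l+1) * u 0 ^ (l+1) = 1" using u0 by (simp add: power_one_over field_simps)
      show "(1 / u 0) ^ (l+1) * (q k e * u 0 ^ k * u 1 ^ (2*r - k)) = q k e * u 0 ^ (k - (l+1)) * u 1 ^ (2*r - k)"
        unfolding k by (rule aux_cancel[OF h])
    qed
    finally show ?thesis .
  next
    case False
    hence u0: "u 0 = 0" by simp
    show ?thesis
    proof (cases "u 1 \<noteq> 0")
      case u1: True
      have "Phi r l F u e = F (Y1 (\<lambda>j. - e j / u 1)) u" using u0 u1 by (simp add: Phi_def)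
      also have "Y1 (\<lambda>j. - e j / u 1) = (\<lambda>p. (-1 / u 1) * Y1 e p)" by (auto simp: Y1_def fun_eq_iff)
      also have "F (\<lambda>p. (-1 / u 1) * Y1 e p) u = (-1 / u 1) ^ (l+1) * F (Y1 e) u" by (rule bihom_homL[OF B])
      also have "F (Y1 e) u = rr 0 e * u 1 ^ (2*r)"
        unfolding r1 u0 by (subst sum_single[of _ 0]) auto
      finally have L: "Phi r l F u e = (-1 / u 1) ^ (l+1) * (rr 0 e * u 1 ^ (2*r))" .
      show ?thesis
      proof (cases "l+1 \<le> 2*r")
        case True
        have "P u e = q (l+1) e * u 1 ^ (2*r - (l+1))"
          unfolding P_def u0 using True by (subst sum_single[of _ "l+1"]) auto
        also have "q (l+1) e = (-1)^(l+1) * rr 0 e" using T[of e] True by simp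
        finally have R: "P u e = (-1)^(l+1) * rr 0 e * u 1 ^ (2*r - (l+1))" .
        have p: "u 1 ^ (2*r) = u 1 ^ (2*r - (l+1)) * u 1 ^ (l+1)"
        proof -
          have kk: "2*r - (l+1) + (l+1) = 2*r" using True by simp
          show ?thesis by (simp only: power_add[symmetric] kk)
        qed
        have m0: "(-1 / u 1) * u 1 = -1" using u1 by simp
        have m: "(-1 / u 1) ^ (l+1) * u 1 ^ (l+1) = (-1) ^ (l+1)"
          unfolding power_mult_distrib[symmetric] m0 ..
        show ?thesis unfolding L R p by (rule aux_cancel2[OF m])
      next
        case False
        have "rr 0 e = 0" using T[of e] False by simp
        moreover have "P u e = 0" unfolding P_def using False by simp
        ultimately show ?thesis using L by simp
      qed
    next
      case False
      hence u1: "u 1 = 0" by simp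
      show ?thesis
      proof (cases "2*r = l+1")
        case True
        have "Phi r l F u e = F (Y0 e) (uv 1 0)" using u0 u1 True by (simp add: Phi_def)
        also have "\<dots> = q (2*r) e"
          unfolding q1 by (subst sum_single[of _ "2*r"]) (auto simp: uv_def)
        also have "\<dots> = P u e" unfolding P_def using True by simp
        finally show ?thesis .
      next
        case False
        have "Phi r l F u e = 0" using u0 u1 False by (simp add: Phi_def)
        moreover have "P u e = 0" unfolding P_def u0 u1
        proof (rule sum.neutral, intro ballI)
          fix k assume k: "k \<in> {l+1..2*r}"
          show "q k e * 0 ^ (k - (l+1)) * 0 ^ (2*r - k) = 0"
          proof (cases "k = l+1")
            case True thus ?thesis using False k by simp
          next
            case False thus ?thesis using k by simp
          qed
        qed
        ultimately show ?thesis by simp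
      qed
    qed
  qed
  have PhiEq: "Phi r l F = P" using PhiP by (intro ext)
  have Pt: "P \<in> target r n l"
  proof (cases "l+1 \<le> 2*r")
    case True
    have "bihom Hset (2*r-l-1) (Eset n) (l+1) P"
      unfolding P_def
    proof (intro bihom_sum finite_atLeastAtMost)
      fix k assume k: "k \<in> {l+1..2*r}"
      have m: "bihom Hset (1 * (k - (l+1)) + 1 * (2*r - k)) (Eset n) (0 * (k - (l+1)) + 0 * (2*r - k))
          (\<lambda>u e. u 0 ^ (k - (l+1)) * u 1 ^ (2*r - k))"
        by (intro bihom_mult bihom_pow bihom_uH finite_Hset finite_Eset) (auto simp: Hset_def)
      have "bihom Hset (0 + (1 * (k - (l+1)) + 1 * (2*r - k))) (Eset n) ((l+1) + (0 * (k - (l+1)) + 0 * (2*r - k)))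
          (\<lambda>u e. q k e * (u 0 ^ (k - (l+1)) * u 1 ^ (2*r - k)))"
        by (rule bihom_mult[OF finite_Hset finite_Eset q2 m])
      moreover have "0 + (1 * (k - (l+1)) + 1 * (2*r - k)) = 2*r-l-1" using k by simp
      ultimately show "bihom Hset (2*r-l-1) (Eset n) (l+1) (\<lambda>u e. q k e * u 0 ^ (k - (l+1)) * u 1 ^ (2*r - k))"
        by (simp add: mult.assoc)
    qed
    thus ?thesis using True by (simp add: target_def)
  next
    case False
    hence "P = (\<lambda>_ _. 0)" unfolding P_def by (intro ext) simp
    thus ?thesis using False by (simp add: target_def)
  qed
  have PP: "Phi r l F u (zz y u) = F y u" for y u
  proof (cases "u 0 \<noteq> 0")
    case True thus ?thesis by (rule Phi_Psi_first[OF F])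
  next
    case F0: False
    show ?thesis
    proof (cases "u 1 \<noteq> 0")
      case True thus ?thesis using F0 Phi_Psi_second[OF F] by simp
    next
      case False
      have z: "zz y u = (\<lambda>_. 0)" using F0 False by (simp add: zz_def fun_eq_iff)
      have "F y u = F y (\<lambda>i. 0 * uv 1 0 i)"
        using F0 False by (intro bihom_local[OF B]) (auto simp: Hset_def less_2_cases_iff)
      also have "\<dots> = 0 ^ (2*r) * F y (uv 1 0)" by (rule bihom_homR[OF B])
      finally have Fy: "F y u = 0 ^ (2*r) * F y (uv 1 0)" .
      show ?thesis
      proof (cases "r = 0")
        case True
        have "F y (uv 1 0) = Phi r l F (uv 1 0) (zz y (uv 1 0))"
          by (rule Phi_Psi_first[OF F, symmetric]) (simp add: uv_def)
        also have "\<dots> = 0" unfolding PhiEq P_def using True by simp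
        finally have "F y u = 0" using Fy by simp
        moreover have "Phi r l F u (zz y u) = 0" using F0 False True by (simp add: Phi_def)
        ultimately show ?thesis by simp
      next
        case r0: False
        have "F y u = 0" using Fy r0 by simp
        moreover have "Phi r l F u (zz y u) = 0"
        proof (cases "2*r = l+1")
          case True
          have e0: "Y0 (\<lambda>_. 0) = (\<lambda>p. 0 * y p)" by (simp add: Y0_def fun_eq_iff)
          have "F (Y0 (\<lambda>_. 0)) (uv 1 0) = 0 ^ (l+1) * F y (uv 1 0)"
            unfolding e0 by (rule bihom_homL[OF B])
          thus ?thesis using F0 False True z by (simp add: Phi_def)
        next
          case ne: False thus ?thesis using F0 False by (simp add: Phi_def)
        qed
        ultimately show ?thesis by simp
      qed
    qed
  qed
  have "Psi (Phi r l F) = F" using PP by (intro ext) (simp add: Psi_def)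
  with PhiEq Pt show ?thesis by simp
qed



theorem lemma5p3:
  fixes r n l :: nat
  assumes "n \<ge> 1"
  shows "\<exists>\<Phi>. bij_betw \<Phi> (prolong r n l) (target r n l)
      \<and> (\<forall>F\<in>prolong r n l. \<forall>G\<in>prolong r n l. \<forall>a b.
            \<Phi> (\<lambda>y u. a * F y u + b * G y u) = (\<lambda>v e. a * \<Phi> F v e + b * \<Phi> G v e))
      \<and> (\<forall>A B. Sp 1 A \<longrightarrow> Sp n B \<longrightarrow>
            (\<forall>F\<in>prolong r n l. \<Phi> (actV n A B F) = actT n A B (\<Phi> F)))
      \<and> (2 * r \<le> l \<longrightarrow> prolong r n l = {\<lambda>_ _. 0})"
proof (rule exI[of _ "Phi r l"], intro conjI)
  show "bij_betw (Phi r l) (prolong r n l) (target r n l)"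
    unfolding bij_betw_def
  proof
    show "inj_on (Phi r l) (prolong r n l)"
    proof (rule inj_onI)
      fix F1 F2 assume F1: "F1 \<in> prolong r n l" and F2: "F2 \<in> prolong r n l" and eq: "Phi r l F1 = Phi r l F2"
      have "F1 = Psi (Phi r l F1)" using prolong_main[OF F1] by simp
      also have "\<dots> = Psi (Phi r l F2)" by (simp add: eq)
      also have "\<dots> = F2" using prolong_main[OF F2] by simp
      finally show "F1 = F2" .
    qed
    show "Phi r l ` prolong r n l = target r n l"
    proof
      show "Phi r l ` prolong r n l \<subseteq> target r n l" using prolong_main by blast
      show "target r n l \<subseteq> Phi r l ` prolong r n l"
      proof
        fix G assume G: "G \<in> target r n l"
        have "G = Phi r l (Psi G)" by (simp add: Phi_Psi[OF G])
        thus "G \<in> Phi r l ` prolong r n l" using Psi_target[OF G] by blast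
      qed
    qed
  qed
  show "\<forall>F\<in>prolong r n l. \<forall>G\<in>prolong r n l. \<forall>a b.
            Phi r l (\<lambda>y u. a * F y u + b * G y u) = (\<lambda>v e. a * Phi r l F v e + b * Phi r l G v e)"
    by (auto simp: Phi_def fun_eq_iff)
  show "\<forall>A B. Sp 1 A \<longrightarrow> Sp n B \<longrightarrow>
            (\<forall>F\<in>prolong r n l. Phi r l (actV n A B F) = actT n A B (Phi r l F))"
  proof (intro allI impI ballI)
    fix A B F assume A: "Sp 1 A" and F: "F \<in> prolong r n l"
    have G: "Phi r l F \<in> target r n l" and FP: "Psi (Phi r l F) = F" using prolong_main[OF F] by auto
    have "actV n A B F = Psi (actT n A B (Phi r l F))"
      using actV_Psi[OF A, of n B "Phi r l F"] FP by simp
    thus "Phi r l (actV n A B F) = actT n A B (Phi r l F)"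
      using Phi_Psi[OF actT_target[OF G]] by simp
  qed
  show "2 * r \<le> l \<longrightarrow> prolong r n l = {\<lambda>_ _. 0}"
  proof
    assume rl: "2 * r \<le> l"
    hence nl: "\<not> l + 1 \<le> 2 * r" by simp
    have z: "(\<lambda>_ _. 0) \<in> target r n l" using nl by (simp add: target_def)
    have "Psi (\<lambda>_ _. 0) = (\<lambda>_ _. 0)" by (simp add: Psi_def)
    hence z2: "(\<lambda>_ _. 0) \<in> prolong r n l" using Psi_target[OF z] by simp
    show "prolong r n l = {\<lambda>_ _. 0}"
    proof
      show "prolong r n l \<subseteq> {\<lambda>_ _. 0}"
      proof
        fix F assume F: "F \<in> prolong r n l"
        have "Phi r l F = (\<lambda>_ _. 0)" using prolong_main[OF F] target_zero nl by blast
        hence "F = Psi (\<lambda>_ _. 0)" using prolong_main[OF F] by simp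
        thus "F \<in> {\<lambda>_ _. 0}" by (simp add: Psi_def)
      qed
      show "{\<lambda>_ _. 0} \<subseteq> prolong r n l" using z2 by simp
    qed
  qed
qed

end
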